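(* Assume the uniform Stokes inf-sup condition below. For each $h$ let $\mathcal J_h:L^2(\Omega,\mathbb M)\to H_N(\mathbf{div},\Omega,\mathbb M)\cap\mathcal P_k(\mathcal T_h,\mathbb M)$ be a bounded linear operator such that (a) $\|\boldsymbol\sigma-\mathcal J_h\boldsymbol\sigma\|_{0,\Omega}\le C\inf_{\boldsymbol\tau_h\in H_N(\mathbf{div},\Omega,\mathbb M)\cap\mathcal P_k(\mathcal T_h,\mathbb M)}\|\boldsymbol\sigma-\boldsymbol\tau_h\|_{0,\Omega}$ for all $\boldsymbol\sigma\in L^2(\Omega,\mathbb M)$ with $C$ independent of $h$, and (b) $\mathbf{div}\,\mathcal J_h\boldsymbol\sigma=Q_h^{k-1}\mathbf{div}\,\boldsymbol\sigma$ for all $\boldsymbol\sigma\in H_N(\mathbf{div},\Omega,\mathbb M)$; and let $\mathcal S_h:\mathcal P_k(\mathcal T_h,\mathbb M)\cap H_N(\mathbf{div},\Omega,\mathbb M)\to X_h^c$ be a linear operator with $\mathbf{div}(\boldsymbol\tau_h-\mathcal S_h\boldsymbol\tau_h)=\mathbf 0$ and $\|\boldsymbol\tau_h-\mathcal S_h\boldsymbol\tau_h\|_{0,\Omega}\le C\|\boldsymbol\tau_h-\boldsymbol\tau_h^{\mathtt t}\|_{0,\Omega}$, $C$ independent of $h$. Then $\mathcal J_h^s:=\mathcal S_h\circ\mathcal J_h:L^2(\Omega,\mathbb S)\to X_h^c$ satisfies (i) $\|\boldsymbol\sigma-\mathcal J_h^s\boldsymbol\sigma\|_{0,\Omega}\le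 C\inf_{\boldsymbol\tau_h\in H_N(\mathbf{div},\Omega,\mathbb M)\cap\mathcal P_k(\mathcal T_h,\mathbb M)}\|\boldsymbol\sigma-\boldsymbol\tau_h\|_{0,\Omega}$ for all $\boldsymbol\sigma\in L^2(\Omega,\mathbb S)$, with $C$ independent of $h$; and (ii) $\mathbf{div}\,\mathcal J_h^s\boldsymbol\sigma=Q_h^{k-1}\mathbf{div}\,\boldsymbol\sigma$ for all $\boldsymbol\sigma\in X$.
   Context: Let $d\in\{2,3\}$, $\Omega\subset\mathbb R^d$ a polyhedral Lipschitz domain with boundary $\Gamma=\Gamma_D\cup\Gamma_N$, $\Gamma_D$ of positive measure, $\Gamma_N=\Gamma\setminus\Gamma_D$, outward normal $\mathbf n$. $\mathbb M$ = real $d\times d$ matrices, $\mathbb S$ the symmetric ones; divergence acts row-wise. $\{\mathcal T_h\}_h$ shape-regular simplicial meshes of size $h$ with $\Gamma_D,\Gamma_N$ unions of boundary faces; $k\ge1$ fixed; $\mathcal P_m(\mathcal T_h,E)$ = piecewise polynomials of degree $\le m$ with values in $E$; $Q_h^{k-1}$ is the $L^2(\Omega,\mathbb R^d)$-orthogonal projection onto $\mathcal P_{k-1}(\mathcal T_h,\mathbb R^d)$. $H^1_N(\Omega,\mathbb R^d)=\{\mathbf v\in H^1:\mathbf v|_{\Gamma_N}=\mathbf 0\}$; $H_N(\mathbf{div},\Omega,\mathbb M)=\{\boldsymbol\tau\in H(\mathbf{div},\Omega,\mathbb M):\langle\boldsymbol\tau\mathbf n,\boldsymbol\phi\rangle_\Gamma=0\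 \forall\boldsymbol\phi\in H^{1/2}(\Gamma,\mathbb R^d),\boldsymbol\phi|_{\Gamma_D}=\mathbf 0\}$; $X$ is the subspace of its symmetric-valued elements; $X_h^c=\mathcal P_k(\mathcal T_h,\mathbb S)\cap X$. Stokes inf-sup condition: there is $\beta>0$ independent of $h$ with $\sup_{\mathbf v_h\in\mathcal P_{k+1}(\mathcal T_h,\mathbb R^d)\cap H^1_N(\Omega,\mathbb R^d)}(\operatorname{div}\mathbf v_h,\phi_h)/\|\mathbf v_h\|_{1,\Omega}\ge\beta\|\phi_h\|_{0,\Omega}$ for all $\phi_h\in\mathcal P_k(\mathcal T_h)$. (Operators $\mathcal J_h$ with properties (a),(b) exist by a smoothed-projection construction of Licht, and operators $\mathcal S_h$ exist under the inf-sup condition.) *)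

theory Defs
  imports "HOL-Analysis.Analysis"
begin

text \<open>Points of R^d are modelled as real^'n (d = CARD('n)); M = real^'n^'n
  (row i = ith row, entry i j = (sigma x) $ i $ j). L^2 elements are represented by
  functions; all equalities of L^2 elements are understood almost everywhere.\<close>

definition pd :: "(real^'n \<Rightarrow> 'b::real_normed_vector) \<Rightarrow> 'n \<Rightarrow> real^'n \<Rightarrow> 'b" where
  "pd f j x = frechet_derivative f (at x) (axis j 1)"

fun Ck :: "nat \<Rightarrow> (real^'n \<Rightarrow> 'b::real_normed_vector) \<Rightarrow> bool" where
  "Ck 0 f = continuous_on UNIV f"
| "Ck (Suc m) f = ((\<forall>x. f differentiable (at x)) \<and> (\<forall>j. Ck m (pd f j)))"

definition smooth_fun :: "(real^'n \<Rightarrow> 'b::real_normed_vector) \<Rightarrow> bool" where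
  "smooth_fun f \<longleftrightarrow> (\<forall>m. Ck m f)"

definition tsupp :: "(real^'n \<Rightarrow> 'b::real_normed_vector) \<Rightarrow> (real^'n) set" where
  "tsupp f = closure {x. f x \<noteq> 0}"

definition test_fun :: "(real^'n) set \<Rightarrow> (real^'n \<Rightarrow> 'b::real_normed_vector) \<Rightarrow> bool" where
  "test_fun \<Omega> \<phi> \<longleftrightarrow> smooth_fun \<phi> \<and> compact (tsupp \<phi>) \<and> tsupp \<phi> \<subseteq> \<Omega>"

definition L2 :: "(real^'n) set \<Rightarrow> (real^'n \<Rightarrow> 'b::euclidean_space) \<Rightarrow> bool" where
  "L2 \<Omega> f \<longleftrightarrow> f \<in> borel_measurable (lebesgue_on \<Omega>)
      \<and> integrable (lebesgue_on \<Omega>) (\<lambda>x. (norm (f x))\<^sup>2)"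

definition L2norm :: "(real^'n) set \<Rightarrow> (real^'n \<Rightarrow> 'b::euclidean_space) \<Rightarrow> real" where
  "L2norm \<Omega> f = sqrt (\<integral>x. (norm (f x))\<^sup>2 \<partial>(lebesgue_on \<Omega>))"

definition L2inner :: "(real^'n) set \<Rightarrow> (real^'n \<Rightarrow> 'b::euclidean_space) \<Rightarrow> (real^'n \<Rightarrow> 'b) \<Rightarrow> real" where
  "L2inner \<Omega> f g = (\<integral>x. f x \<bullet> g x \<partial>(lebesgue_on \<Omega>))"

definition L2proj :: "(real^'n) set \<Rightarrow> ((real^'n \<Rightarrow> 'b::euclidean_space) \<Rightarrow> bool)
    \<Rightarrow> (real^'n \<Rightarrow> 'b) \<Rightarrow> (real^'n \<Rightarrow> 'b) \<Rightarrow> bool" where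
  "L2proj \<Omega> P g q \<longleftrightarrow> P q \<and> (\<forall>v. P v \<longrightarrow> L2inner \<Omega> (\<lambda>x. g x - q x) v = 0)"

definition symm_valued :: "(real^'n) set \<Rightarrow> (real^'n \<Rightarrow> real^'n^'n) \<Rightarrow> bool" where
  "symm_valued \<Omega> \<sigma> \<longleftrightarrow> (AE x in lebesgue_on \<Omega>. transpose (\<sigma> x) = \<sigma> x)"

text \<open>row-wise weak divergence: (div sigma)_i = sum_j d_j sigma_ij\<close>
definition has_weak_div :: "(real^'n) set \<Rightarrow> (real^'n \<Rightarrow> real^'n^'n) \<Rightarrow> (real^'n \<Rightarrow> real^'n) \<Rightarrow> bool" where
  "has_weak_div \<Omega> \<sigma> g \<longleftrightarrow> L2 \<Omega> \<sigma> \<and> L2 \<Omega> g \<and>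
     (\<forall>\<phi> :: real^'n \<Rightarrow> real^'n. test_fun \<Omega> \<phi> \<longrightarrow>
        (\<integral>x. (\<Sum>i\<in>UNIV. \<Sum>j\<in>UNIV. \<sigma> x $ i $ j * pd \<phi> j x $ i) \<partial>(lebesgue_on \<Omega>))
          = - (\<integral>x. g x \<bullet> \<phi> x \<partial>(lebesgue_on \<Omega>)))"

text \<open>weak gradient of a vector field: G_ij = d_j v_i\<close>
definition has_weak_grad :: "(real^'n) set \<Rightarrow> (real^'n \<Rightarrow> real^'n) \<Rightarrow> (real^'n \<Rightarrow> real^'n^'n) \<Rightarrow> bool" where
  "has_weak_grad \<Omega> v G \<longleftrightarrow> L2 \<Omega> v \<and> L2 \<Omega> G \<and>
     (\<forall>\<psi> :: real^'n \<Rightarrow> real^'n^'n. test_fun \<Omega> \<psi> \<longrightarrow>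
        (\<integral>x. (\<Sum>i\<in>UNIV. \<Sum>j\<in>UNIV. v x $ i * pd \<psi> j x $ i $ j) \<partial>(lebesgue_on \<Omega>))
          = - (\<integral>x. G x \<bullet> \<psi> x \<partial>(lebesgue_on \<Omega>)))"

definition H1grad :: "(real^'n) set \<Rightarrow> (real^'n \<Rightarrow> real^'n) \<Rightarrow> (real^'n \<Rightarrow> real^'n^'n)" where
  "H1grad \<Omega> v = (SOME G. has_weak_grad \<Omega> v G)"

definition H1norm :: "(real^'n) set \<Rightarrow> (real^'n \<Rightarrow> real^'n) \<Rightarrow> real" where
  "H1norm \<Omega> v = sqrt ((L2norm \<Omega> v)\<^sup>2 + (L2norm \<Omega> (H1grad \<Omega> v))\<^sup>2)"

definition H1div :: "(real^'n) set \<Rightarrow> (real^'n \<Rightarrow> real^'n) \<Rightarrow> real^'n \<Rightarrow> real" where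
  "H1div \<Omega> v x = (\<Sum>i\<in>UNIV. H1grad \<Omega> v x $ i $ i)"

text \<open>H_N(div,Omega,M): tau in H(div) with <tau n, phi>_Gamma = 0 for all phi vanishing on Gamma_D,
  the duality pairing being given by Green's formula
  <tau n, v>_Gamma = int_Omega tau : grad v + div tau . v  (v tested over C^1 functions vanishing on Gamma_D)\<close>
definition HdivN :: "(real^'n) set \<Rightarrow> (real^'n) set \<Rightarrow> (real^'n \<Rightarrow> real^'n^'n) \<Rightarrow> bool" where
  "HdivN \<Omega> \<Gamma>D \<tau> \<longleftrightarrow> (\<exists>g. has_weak_div \<Omega> \<tau> g \<and>
     (\<forall>v :: real^'n \<Rightarrow> real^'n. Ck 1 v \<and> (\<forall>x\<in>\<Gamma>D. v x = 0) \<longrightarrow>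
        (\<integral>x. (\<Sum>i\<in>UNIV. \<Sum>j\<in>UNIV. \<tau> x $ i $ j * pd v j x $ i) + g x \<bullet> v x \<partial>(lebesgue_on \<Omega>)) = 0))"

definition Xsp :: "(real^'n) set \<Rightarrow> (real^'n) set \<Rightarrow> (real^'n \<Rightarrow> real^'n^'n) \<Rightarrow> bool" where
  "Xsp \<Omega> \<Gamma>D \<tau> \<longleftrightarrow> HdivN \<Omega> \<Gamma>D \<tau> \<and> symm_valued \<Omega> \<tau>"

definition lipschitz_domain :: "(real^'n) set \<Rightarrow> bool" where
  "lipschitz_domain \<Omega> \<longleftrightarrow> open \<Omega> \<and> bounded \<Omega> \<and> connected \<Omega> \<and> \<Omega> \<noteq> {} \<and>
     (\<forall>p\<in>frontier \<Omega>. \<exists>r>0. \<exists>e L g. norm e = 1 \<and>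
         L-lipschitz_on {y. y \<bullet> e = 0} g \<and>
         \<Omega> \<inter> ball p r = {x\<in>ball p r. g (x - (x \<bullet> e) *\<^sub>R e) < x \<bullet> e})"

definition simplex_verts :: "(real^'n) set \<Rightarrow> bool" where
  "simplex_verts V \<longleftrightarrow> finite V \<and> card V = CARD('n) + 1 \<and> \<not> affine_dependent V"

definition mesh :: "(real^'n) set \<Rightarrow> (real^'n) set set \<Rightarrow> bool" where
  "mesh \<Omega> T \<longleftrightarrow> finite T \<and> (\<forall>V\<in>T. simplex_verts V) \<and>
     \<Union> ((\<lambda>V. convex hull V) ` T) = closure \<Omega> \<and>
     (\<forall>V\<in>T. \<forall>W\<in>T. V \<noteq> W \<longrightarrow> convex hull V \<inter> convex hull W = convex hull (V \<inter> W))"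

definition polyhedral_domain :: "(real^'n) set \<Rightarrow> bool" where
  "polyhedral_domain \<Omega> \<longleftrightarrow> (\<exists>T. mesh \<Omega> T)"

definition meshsize :: "(real^'n) set set \<Rightarrow> real" where
  "meshsize T = Max ((\<lambda>V. diameter (convex hull V)) ` T)"

definition inradius :: "(real^'n) set \<Rightarrow> real" where
  "inradius K = Sup {r. \<exists>x. ball x r \<subseteq> K}"

definition bfaces :: "(real^'n) set \<Rightarrow> (real^'n) set set \<Rightarrow> (real^'n) set set" where
  "bfaces \<Omega> T = {convex hull (V - {v}) | V v. V \<in> T \<and> v \<in> V \<and> convex hull (V - {v}) \<subseteq> frontier \<Omega>}"

definition poly_fun :: "nat \<Rightarrow> (real^'n \<Rightarrow> real) \<Rightarrow> bool" where
  "poly_fun m p \<longleftrightarrow> (\<exists>c. \<forall>x. p x =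
      (\<Sum>\<alpha>\<in>{\<alpha>::'n \<Rightarrow> nat. sum \<alpha> UNIV \<le> m}. c \<alpha> * (\<Prod>i\<in>UNIV. x $ i ^ \<alpha> i)))"

definition pw_poly :: "(real^'n) set set \<Rightarrow> nat \<Rightarrow> (real^'n \<Rightarrow> 'b::euclidean_space) \<Rightarrow> bool" where
  "pw_poly T m f \<longleftrightarrow> (\<forall>V\<in>T. \<exists>p. (\<forall>b\<in>Basis. poly_fun m (\<lambda>x. p x \<bullet> b)) \<and>
        (\<forall>x\<in>interior (convex hull V). f x = p x))"

definition Pk :: "(real^'n) set \<Rightarrow> (real^'n) set set \<Rightarrow> nat \<Rightarrow> (real^'n \<Rightarrow> 'b::euclidean_space) \<Rightarrow> bool" where
  "Pk \<Omega> T m f \<longleftrightarrow> L2 \<Omega> f \<and> pw_poly T m f"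

definition Vh :: "(real^'n) set \<Rightarrow> (real^'n) set \<Rightarrow> (real^'n) set set \<Rightarrow> nat \<Rightarrow> (real^'n \<Rightarrow> real^'n^'n) \<Rightarrow> bool" where
  "Vh \<Omega> \<Gamma>D T k \<tau> \<longleftrightarrow> HdivN \<Omega> \<Gamma>D \<tau> \<and> Pk \<Omega> T k \<tau>"

definition Xhc :: "(real^'n) set \<Rightarrow> (real^'n) set \<Rightarrow> (real^'n) set set \<Rightarrow> nat \<Rightarrow> (real^'n \<Rightarrow> real^'n^'n) \<Rightarrow> bool" where
  "Xhc \<Omega> \<Gamma>D T k \<tau> \<longleftrightarrow> Pk \<Omega> T k \<tau> \<and> symm_valued \<Omega> \<tau> \<and> Xsp \<Omega> \<Gamma>D \<tau>"

definition V1h :: "(real^'n) set \<Rightarrow> (real^'n) set \<Rightarrow> (real^'n) set set \<Rightarrow> nat \<Rightarrow> (real^'n \<Rightarrow> real^'n) \<Rightarrow> bool" where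
  "V1h \<Omega> \<Gamma>D T m v \<longleftrightarrow> Pk \<Omega> T m v \<and> continuous_on (closure \<Omega>) v \<and>
      (\<forall>x\<in>frontier \<Omega> - \<Gamma>D. v x = 0)"

definition lin_op :: "(real^'n) set \<Rightarrow> ((real^'n \<Rightarrow> real^'n^'n) \<Rightarrow> bool)
    \<Rightarrow> ((real^'n \<Rightarrow> real^'n^'n) \<Rightarrow> (real^'n \<Rightarrow> real^'n^'n)) \<Rightarrow> bool" where
  "lin_op \<Omega> D A \<longleftrightarrow>
     (\<forall>\<sigma> \<tau> a b. D \<sigma> \<and> D \<tau> \<longrightarrow>
        (AE x in lebesgue_on \<Omega>. A (\<lambda>y. a *\<^sub>R \<sigma> y + b *\<^sub>R \<tau> y) x = a *\<^sub>R A \<sigma> x + b *\<^sub>R A \<tau> x)) \<and>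
     (\<forall>\<sigma> \<tau>. D \<sigma> \<and> D \<tau> \<and> (AE x in lebesgue_on \<Omega>. \<sigma> x = \<tau> x) \<longrightarrow>
        (AE x in lebesgue_on \<Omega>. A \<sigma> x = A \<tau> x))"

end

theory Submission
  imports Defs
begin

lemma norm_transpose_eq: "norm (transpose (A::real^'n^'m)) = norm A"
proof -
  have "(norm (transpose A))^2 = (\<Sum>i\<in>UNIV. \<Sum>j\<in>UNIV. (A $ j $ i)^2)"
    by (simp add: norm_vec_def L2_set_def transpose_def sum_nonneg)
  also have "\<dots> = (\<Sum>j\<in>UNIV. \<Sum>i\<in>UNIV. (A $ j $ i)^2)" by (rule sum.swap)
  also have "\<dots> = (norm A)^2"
    by (simp add: norm_vec_def L2_set_def sum_nonneg)
  finally show ?thesis by (simp add: power2_eq_iff_nonneg)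
qed

lemma L2_bound:
  fixes f g :: "real^'n \<Rightarrow> 'b::euclidean_space" and h :: "real^'n \<Rightarrow> 'c::euclidean_space"
  assumes f: "L2 \<Omega> f" and g: "L2 \<Omega> g" and hm: "h \<in> borel_measurable (lebesgue_on \<Omega>)"
    and b: "\<And>x. norm (h x) \<le> norm (f x) + norm (g x)"
  shows "L2 \<Omega> h \<and> L2norm \<Omega> h \<le> 2 * (L2norm \<Omega> f + L2norm \<Omega> g)"
proof -
  let ?M = "lebesgue_on \<Omega>"
  have fi: "integrable ?M (\<lambda>x. (norm (f x))\<^sup>2)" and gi: "integrable ?M (\<lambda>x. (norm (g x))\<^sup>2)"
    using f g by (auto simp: L2_def)
  have pb: "(norm (h x))\<^sup>2 \<le> 2 * (norm (f x))\<^sup>2 + 2 * (norm (g x))\<^sup>2" for x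
  proof -
    have "(norm (h x))\<^sup>2 \<le> (norm (f x) + norm (g x))\<^sup>2"
      using b[of x] by (simp add: power_mono)
    also have "\<dots> \<le> 2 * (norm (f x))\<^sup>2 + 2 * (norm (g x))\<^sup>2"
      by (smt (verit) sum_squares_bound power2_sum)
    finally show ?thesis .
  qed
  have bi: "integrable ?M (\<lambda>x. 2 * (norm (f x))\<^sup>2 + 2 * (norm (g x))\<^sup>2)"
    using fi gi by auto
  have hm2: "(\<lambda>x. (norm (h x))\<^sup>2) \<in> borel_measurable ?M" using hm by measurable
  have hi: "integrable ?M (\<lambda>x. (norm (h x))\<^sup>2)"
    apply (rule Bochner_Integration.integrable_bound[OF bi hm2])
    using pb by (auto intro!: AE_I2 simp: abs_le_iff)
  have "(\<integral>x. (norm (h x))\<^sup>2 \<partial>?M) \<le> (\<integral>x. 2 * (norm (f x))\<^sup>2 + 2 * (norm (g x))\<^sup>2 \<partial>?M)"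
    by (rule integral_mono[OF hi bi pb])
  also have "\<dots> = 2 * (\<integral>x. (norm (f x))\<^sup>2 \<partial>?M) + 2 * (\<integral>x. (norm (g x))\<^sup>2 \<partial>?M)"
    using fi gi by simp
  finally have I: "(\<integral>x. (norm (h x))\<^sup>2 \<partial>?M) \<le> 2 * (\<integral>x. (norm (f x))\<^sup>2 \<partial>?M) + 2 * (\<integral>x. (norm (g x))\<^sup>2 \<partial>?M)" .
  define A where "A = (\<integral>x. (norm (f x))\<^sup>2 \<partial>?M)"
  define B where "B = (\<integral>x. (norm (g x))\<^sup>2 \<partial>?M)"
  have A0: "A \<ge> 0" "B \<ge> 0" unfolding A_def B_def by (auto intro: integral_nonneg_AE)
  have "sqrt (\<integral>x. (norm (h x))\<^sup>2 \<partial>?M) \<le> sqrt (2*A + 2*B)"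
    using I by (simp add: A_def B_def)
  also have "\<dots> \<le> 2 * (sqrt A + sqrt B)"
  proof (rule real_le_lsqrt)
    show "0 \<le> 2 * (sqrt A + sqrt B)" using A0 by simp
    have "(2 * (sqrt A + sqrt B))\<^sup>2 = 4*A + 8 * sqrt A * sqrt B + 4*B"
      using A0 by (simp add: power2_sum algebra_simps)
    moreover have "sqrt A * sqrt B \<ge> 0" using A0 by simp
    ultimately show "2*A+2*B \<le> (2 * (sqrt A + sqrt B))\<^sup>2" using A0 by linarith
  qed
  finally show ?thesis using hm hi by (simp add: L2_def L2norm_def A_def B_def)
qed

lemma L2norm_cong_AE:
  fixes f g :: "real^'n \<Rightarrow> 'b::euclidean_space"
  assumes "f \<in> borel_measurable (lebesgue_on \<Omega>)" "g \<in> borel_measurable (lebesgue_on \<Omega>)"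
    and "AE x in lebesgue_on \<Omega>. f x = g x"
  shows "L2norm \<Omega> f = L2norm \<Omega> g"
proof -
  have "(\<integral>x. (norm (f x))\<^sup>2 \<partial>lebesgue_on \<Omega>) = (\<integral>x. (norm (g x))\<^sup>2 \<partial>lebesgue_on \<Omega>)"
    apply (rule integral_cong_AE)
    using assms by (auto elim!: AE_mp)
  then show ?thesis by (simp add: L2norm_def)
qed

lemma L2norm_cong_norm:
  fixes f :: "real^'n \<Rightarrow> 'b::euclidean_space" and g :: "real^'n \<Rightarrow> 'c::euclidean_space"
  assumes "\<And>x. norm (f x) = norm (g x)"
  shows "L2norm \<Omega> f = L2norm \<Omega> g"
  using assms by (simp add: L2norm_def)

lemma transpose_meas:
  fixes f :: "real^'n \<Rightarrow> real^'n^'n"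
  assumes "f \<in> borel_measurable M"
  shows "(\<lambda>x. transpose (f x)) \<in> borel_measurable M"
proof -
  have "linear (transpose :: real^'n^'n \<Rightarrow> real^'n^'n)"
    by (rule linearI) (auto simp: transpose_def vec_eq_iff)
  then have "continuous_on UNIV (transpose :: real^'n^'n \<Rightarrow> real^'n^'n)"
    by (simp add: linear_continuous_on linear_linear)
  then have "(transpose :: real^'n^'n \<Rightarrow> real^'n^'n) \<in> borel_measurable borel"
    by (rule borel_measurable_continuous_onI)
  from measurable_compose[OF assms this] show ?thesis by (simp add: o_def)
qed

lemma nth_meas:
  fixes f :: "'a \<Rightarrow> 'b::real_normed_vector^'n"
  assumes "f \<in> borel_measurable M"
  shows "(\<lambda>x. f x $ i) \<in> borel_measurable M"
proof -
  have "continuous_on UNIV (\<lambda>v::'b^'n. v $ i)"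
    by (intro linear_continuous_on bounded_linear_vec_nth)
  then have "(\<lambda>v::'b^'n. v $ i) \<in> borel_measurable borel"
    by (rule borel_measurable_continuous_onI)
  from measurable_compose[OF assms this] show ?thesis by (simp add: o_def)
qed

lemma pd_test:
  fixes \<phi> :: "real^'n \<Rightarrow> 'b::real_normed_vector"
  assumes "test_fun \<Omega> \<phi>"
  shows "continuous_on UNIV (pd \<phi> j) \<and> (\<exists>B. \<forall>x. norm (pd \<phi> j x) \<le> B)"
proof -
  have sm: "smooth_fun \<phi>" and cp: "compact (tsupp \<phi>)" using assms by (auto simp: test_fun_def)
  have "Ck (Suc 0) \<phi>" using sm by (simp add: smooth_fun_def del: Ck.simps)
  then have c: "continuous_on UNIV (pd \<phi> j)" by simp
  have z: "pd \<phi> j x = 0" if "x \<notin> tsupp \<phi>" for x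
  proof -
    have op: "open (- tsupp \<phi>)" by (simp add: tsupp_def open_Compl)
    have eq: "\<And>y. y \<in> - tsupp \<phi> \<Longrightarrow> (\<lambda>_. 0) y = \<phi> y"
      using closure_subset[of "{x. \<phi> x \<noteq> 0}"] by (auto simp: tsupp_def)
    have "((\<lambda>_. 0) has_derivative (\<lambda>_. 0)) (at x)" by simp
    then have "(\<phi> has_derivative (\<lambda>_. 0)) (at x)"
      by (rule has_derivative_transform_within_open[OF _ op _ eq]) (use that in auto)
    then have "(\<lambda>_. 0) = frechet_derivative \<phi> (at x)" by (rule frechet_derivative_at)
    then show ?thesis unfolding pd_def by (metis)
  qed
  have "compact (pd \<phi> j ` tsupp \<phi>)"
    by (rule compact_continuous_image[OF continuous_on_subset[OF c] cp]) auto
  then have "bounded (pd \<phi> j ` tsupp \<phi>)" by (rule compact_imp_bounded)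
  then obtain B where B: "\<And>x. x \<in> tsupp \<phi> \<Longrightarrow> norm (pd \<phi> j x) \<le> B"
    by (auto simp: bounded_iff)
  have "norm (pd \<phi> j x) \<le> max B 0" for x
    using B[of x] z[of x] by (cases "x \<in> tsupp \<phi>") auto
  then show ?thesis using c by blast
qed

lemma le_one_plus_sq: "(a::real) \<le> 1 + a\<^sup>2"
proof (cases "a \<le> 1")
  case True then show ?thesis by (smt (verit) zero_le_power2)
next
  case False then have "a * 1 \<le> a * a" by (intro mult_left_mono) auto
  then show ?thesis by (simp add: power2_eq_square)
qed

lemma integrable_test:
  fixes \<sigma> :: "real^'n \<Rightarrow> real^'n^'n" and \<phi> :: "real^'n \<Rightarrow> real^'n"
  assumes fm: "finite_measure (lebesgue_on \<Omega>)" and Om: "\<Omega> \<in> sets lebesgue"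
    and s: "L2 \<Omega> \<sigma>" and t: "test_fun \<Omega> \<phi>"
  shows "integrable (lebesgue_on \<Omega>) (\<lambda>x. \<Sum>i\<in>UNIV. \<Sum>j\<in>UNIV. \<sigma> x $ i $ j * pd \<phi> j x $ i)"
proof -
  let ?M = "lebesgue_on \<Omega>"
  have "\<forall>j. \<exists>B. \<forall>x. norm (pd \<phi> j x) \<le> B" using pd_test[OF t] by blast
  then obtain Bf where Bf: "\<And>j x. norm (pd \<phi> j x) \<le> Bf j" by metis
  define B where "B = (\<Sum>j\<in>UNIV. Bf j)"
  have B0: "\<And>j. 0 \<le> Bf j" using Bf by (meson norm_ge_zero order_trans)
  have sm: "\<sigma> \<in> borel_measurable ?M" and si: "integrable ?M (\<lambda>x. (norm (\<sigma> x))\<^sup>2)"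
    using s by (auto simp: L2_def)
  have pdm: "pd \<phi> j \<in> borel_measurable ?M" for j
    using pd_test[OF t] continuous_imp_measurable_on_sets_lebesgue[OF _ Om] continuous_on_subset by blast
  have bi: "integrable ?M (\<lambda>x. real (CARD('n)) * B * (1 + (norm (\<sigma> x))\<^sup>2))"
  proof -
    have "integrable ?M (\<lambda>x. 1 + (norm (\<sigma> x))\<^sup>2)"
      by (rule Bochner_Integration.integrable_add[OF finite_measure.integrable_const[OF fm] si])
    then show ?thesis by (rule integrable_mult_right)
  qed
  have meas: "(\<lambda>x. \<Sum>i\<in>UNIV. \<Sum>j\<in>UNIV. \<sigma> x $ i $ j * pd \<phi> j x $ i) \<in> borel_measurable ?M"
    by (intro borel_measurable_sum borel_measurable_times nth_meas sm pdm)
  have pb: "\<bar>\<Sum>i\<in>UNIV. \<Sum>j\<in>UNIV. \<sigma> x $ i $ j * pd \<phi> j x $ i\<bar> \<le> real (CARD('n)) * B * (1 + (norm (\<sigma> x))\<^sup>2)" for x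
  proof -
    have e: "\<bar>\<sigma> x $ i $ j\<bar> \<le> 1 + (norm (\<sigma> x))\<^sup>2" for i j
    proof -
      have "\<bar>\<sigma> x $ i $ j\<bar> \<le> norm (\<sigma> x $ i)" by (rule component_le_norm_cart)
      also have "\<dots> \<le> norm (\<sigma> x)" by (rule Finite_Cartesian_Product.norm_nth_le)
      also have "\<dots> \<le> 1 + (norm (\<sigma> x))\<^sup>2" by (rule le_one_plus_sq)
      finally show ?thesis .
    qed
    have p: "\<bar>pd \<phi> j x $ i\<bar> \<le> Bf j" for i j
      using component_le_norm_cart[of "pd \<phi> j x" i] Bf[of j x] by linarith
    have "\<bar>\<Sum>i\<in>UNIV. \<Sum>j\<in>UNIV. \<sigma> x $ i $ j * pd \<phi> j x $ i\<bar> \<le> (\<Sum>i\<in>UNIV. \<Sum>j\<in>UNIV. \<bar>\<sigma> x $ i $ j * pd \<phi> j x $ i\<bar>)"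
      by (rule order_trans[OF sum_abs]) (intro sum_mono sum_abs)
    also have "\<dots> \<le> (\<Sum>i\<in>(UNIV::'n set). \<Sum>j\<in>UNIV. (1 + (norm (\<sigma> x))\<^sup>2) * Bf j)"
      by (intro sum_mono) (simp add: abs_mult mult_mono[OF e p])
    also have "\<dots> = (\<Sum>i\<in>(UNIV::'n set). (1 + (norm (\<sigma> x))\<^sup>2) * B)"
      unfolding B_def by (simp only: sum_distrib_left)
    also have "\<dots> = real (CARD('n)) * B * (1 + (norm (\<sigma> x))\<^sup>2)"
      by (simp add: mult_ac)
    finally show ?thesis .
  qed
  show ?thesis
  proof (rule Bochner_Integration.integrable_bound[OF bi meas], rule AE_I2)
    fix x
    have "\<bar>\<Sum>i\<in>UNIV. \<Sum>j\<in>UNIV. \<sigma> x $ i $ j * pd \<phi> j x $ i\<bar> \<le> \<bar>real (CARD('n)) * B * (1 + (norm (\<sigma> x))\<^sup>2)\<bar>"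
      by (rule order_trans[OF pb abs_ge_self])
    then show "norm (\<Sum>i\<in>UNIV. \<Sum>j\<in>UNIV. \<sigma> x $ i $ j * pd \<phi> j x $ i) \<le> norm (real (CARD('n)) * B * (1 + (norm (\<sigma> x))\<^sup>2))"
      by (simp only: real_norm_def)
  qed
qed

theorem corollary4p7:
  fixes \<Omega> :: "(real^'n) set" and \<Gamma>D :: "(real^'n) set"
    and H :: "real set" and T :: "real \<Rightarrow> (real^'n) set set" and k :: nat
    and J S :: "real \<Rightarrow> (real^'n \<Rightarrow> real^'n^'n) \<Rightarrow> (real^'n \<Rightarrow> real^'n^'n)"
  assumes dim: "CARD('n) = 2 \<or> CARD('n) = 3"
    and dom: "lipschitz_domain \<Omega>" "polyhedral_domain \<Omega>"
    and GammaD: "\<Gamma>D \<subseteq> frontier \<Omega>" "\<Gamma>D \<noteq> {}"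
    and meshes: "\<forall>h\<in>H. 0 < h \<and> mesh \<Omega> (T h) \<and> meshsize (T h) = h \<and>
                   (\<exists>F \<subseteq> bfaces \<Omega> (T h). \<Gamma>D = \<Union> F)"
    and shape_reg: "\<exists>c. \<forall>h\<in>H. \<forall>V\<in>T h. diameter (convex hull V) \<le> c * inradius (convex hull V)"
    and k: "1 \<le> k"
    and infsup: "\<exists>\<beta>>0. \<forall>h\<in>H. \<forall>\<phi> :: real^'n \<Rightarrow> real. Pk \<Omega> (T h) k \<phi> \<longrightarrow>
        \<beta> * L2norm \<Omega> \<phi> \<le>
          (SUP v\<in>{v. V1h \<Omega> \<Gamma>D (T h) (k + 1) v \<and> H1norm \<Omega> v \<noteq> 0}.
              (\<integral>x. H1div \<Omega> v x * \<phi> x \<partial>(lebesgue_on \<Omega>)) / H1norm \<Omega> v)"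
    and J_op: "\<forall>h\<in>H. lin_op \<Omega> (L2 \<Omega>) (J h) \<and>
        (\<exists>M. \<forall>\<sigma>. L2 \<Omega> \<sigma> \<longrightarrow> L2norm \<Omega> (J h \<sigma>) \<le> M * L2norm \<Omega> \<sigma>) \<and>
        (\<forall>\<sigma>. L2 \<Omega> \<sigma> \<longrightarrow> Vh \<Omega> \<Gamma>D (T h) k (J h \<sigma>))"
    and J_a: "\<exists>C. \<forall>h\<in>H. \<forall>\<sigma>. L2 \<Omega> \<sigma> \<longrightarrow>
        L2norm \<Omega> (\<lambda>x. \<sigma> x - J h \<sigma> x)
          \<le> C * (INF \<tau>\<in>{\<tau>. Vh \<Omega> \<Gamma>D (T h) k \<tau>}. L2norm \<Omega> (\<lambda>x. \<sigma> x - \<tau> x))"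
    and J_b: "\<forall>h\<in>H. \<forall>\<sigma> g q. HdivN \<Omega> \<Gamma>D \<sigma> \<and> has_weak_div \<Omega> \<sigma> g \<and>
        L2proj \<Omega> (Pk \<Omega> (T h) (k - 1)) g q \<longrightarrow> has_weak_div \<Omega> (J h \<sigma>) q"
    and S_op: "\<forall>h\<in>H. lin_op \<Omega> (Vh \<Omega> \<Gamma>D (T h) k) (S h) \<and>
        (\<forall>\<tau>. Vh \<Omega> \<Gamma>D (T h) k \<tau> \<longrightarrow> Xhc \<Omega> \<Gamma>D (T h) k (S h \<tau>))"
    and S_prop: "\<exists>C. \<forall>h\<in>H. \<forall>\<tau>. Vh \<Omega> \<Gamma>D (T h) k \<tau> \<longrightarrow>
        has_weak_div \<Omega> (\<lambda>x. \<tau> x - S h \<tau> x) (\<lambda>x. 0) \<and>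
        L2norm \<Omega> (\<lambda>x. \<tau> x - S h \<tau> x) \<le> C * L2norm \<Omega> (\<lambda>x. \<tau> x - transpose (\<tau> x))"
  shows "\<exists>C. \<forall>h\<in>H.
     (\<forall>\<sigma>. L2 \<Omega> \<sigma> \<and> symm_valued \<Omega> \<sigma> \<longrightarrow>
        Xhc \<Omega> \<Gamma>D (T h) k (S h (J h \<sigma>)) \<and>
        L2norm \<Omega> (\<lambda>x. \<sigma> x - S h (J h \<sigma>) x)
          \<le> C * (INF \<tau>\<in>{\<tau>. Vh \<Omega> \<Gamma>D (T h) k \<tau>}. L2norm \<Omega> (\<lambda>x. \<sigma> x - \<tau> x))) \<and>
     (\<forall>\<sigma> g q. Xsp \<Omega> \<Gamma>D \<sigma> \<and> has_weak_div \<Omega> \<sigma> g \<and>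
        L2proj \<Omega> (Pk \<Omega> (T h) (k - 1)) g q \<longrightarrow> has_weak_div \<Omega> (S h (J h \<sigma>)) q)"
proof -
  obtain Ca where Ca: "\<forall>h\<in>H. \<forall>\<sigma>. L2 \<Omega> \<sigma> \<longrightarrow>
        L2norm \<Omega> (\<lambda>x. \<sigma> x - J h \<sigma> x)
          \<le> Ca * (INF \<tau>\<in>{\<tau>. Vh \<Omega> \<Gamma>D (T h) k \<tau>}. L2norm \<Omega> (\<lambda>x. \<sigma> x - \<tau> x))"
    using J_a by blast
  obtain Cs where Cs: "\<forall>h\<in>H. \<forall>\<tau>. Vh \<Omega> \<Gamma>D (T h) k \<tau> \<longrightarrow>
        has_weak_div \<Omega> (\<lambda>x. \<tau> x - S h \<tau> x) (\<lambda>x. 0) \<and>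
        L2norm \<Omega> (\<lambda>x. \<tau> x - S h \<tau> x) \<le> Cs * L2norm \<Omega> (\<lambda>x. \<tau> x - transpose (\<tau> x))"
    using S_prop by blast
  have Oopen: "open \<Omega>" and Obdd: "bounded \<Omega>" using dom(1) by (auto simp: lipschitz_domain_def)
  have Olm: "\<Omega> \<in> lmeasurable" by (rule lmeasurable_open[OF Obdd Oopen])
  have fm: "finite_measure (lebesgue_on \<Omega>)" by (rule finite_measure_lebesgue_on[OF Olm])
  have Osets: "\<Omega> \<in> sets lebesgue" using Olm by (simp add: fmeasurable_def)
  let ?C = "2 * (1 + 4 * \<bar>Cs\<bar>) * Ca"
  show ?thesis
  proof (rule exI[of _ ?C], intro ballI conjI allI impI)
    fix h assume hH: "h \<in> H"
    fix \<sigma> assume sg: "L2 \<Omega> \<sigma> \<and> symm_valued \<Omega> \<sigma>"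
    have sL: "L2 \<Omega> \<sigma>" and sym: "AE x in lebesgue_on \<Omega>. transpose (\<sigma> x) = \<sigma> x"
      using sg by (auto simp: symm_valued_def)
    define \<tau> where "\<tau> = J h \<sigma>"
    define \<rho> where "\<rho> = S h \<tau>"
    have tV: "Vh \<Omega> \<Gamma>D (T h) k \<tau>" using J_op hH sL by (simp add: \<tau>_def)
    have tL: "L2 \<Omega> \<tau>" using tV by (simp add: Vh_def Pk_def)
    have rX: "Xhc \<Omega> \<Gamma>D (T h) k \<rho>" using S_op hH tV by (simp add: \<rho>_def)
    then show "Xhc \<Omega> \<Gamma>D (T h) k (S h (J h \<sigma>))" by (simp add: \<rho>_def \<tau>_def)
    have rL: "L2 \<Omega> \<rho>" using rX by (simp add: Xhc_def Pk_def)
    have sm: "\<sigma> \<in> borel_measurable (lebesgue_on \<Omega>)" using sL by (simp add: L2_def)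
    have tm: "\<tau> \<in> borel_measurable (lebesgue_on \<Omega>)" using tL by (simp add: L2_def)
    have rm: "\<rho> \<in> borel_measurable (lebesgue_on \<Omega>)" using rL by (simp add: L2_def)
    have ttm: "(\<lambda>x. transpose (\<tau> x)) \<in> borel_measurable (lebesgue_on \<Omega>)" by (rule transpose_meas[OF tm])
    have ttL: "L2 \<Omega> (\<lambda>x. transpose (\<tau> x))"
      using L2_bound[OF tL tL ttm] by (simp add: norm_transpose_eq)
    define a where "a = L2norm \<Omega> (\<lambda>x. \<sigma> x - \<tau> x)"
    have eL: "L2 \<Omega> (\<lambda>x. \<sigma> x - \<tau> x)"
      using L2_bound[OF sL tL, of "\<lambda>x. \<sigma> x - \<tau> x"] sm tm by (auto intro: norm_triangle_ineq4)
    have a0: "0 \<le> a" unfolding a_def L2norm_def by (auto intro: integral_nonneg_AE)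
    have aI: "a \<le> Ca * (INF \<tau>\<in>{\<tau>. Vh \<Omega> \<Gamma>D (T h) k \<tau>}. L2norm \<Omega> (\<lambda>x. \<sigma> x - \<tau> x))"
      using Ca hH sL by (simp add: a_def \<tau>_def)
    have e1L: "L2 \<Omega> (\<lambda>x. \<tau> x - \<sigma> x)"
      using L2_bound[OF tL sL, of "\<lambda>x. \<tau> x - \<sigma> x"] sm tm by (auto intro: norm_triangle_ineq4)
    have e1: "L2norm \<Omega> (\<lambda>x. \<tau> x - \<sigma> x) = a"
      unfolding a_def by (rule L2norm_cong_norm) (simp add: norm_minus_commute)
    have e2L: "L2 \<Omega> (\<lambda>x. \<sigma> x - transpose (\<tau> x))"
      using L2_bound[OF sL ttL, of "\<lambda>x. \<sigma> x - transpose (\<tau> x)"] sm ttm by (auto intro: norm_triangle_ineq4)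
    have trd: "transpose (A - B) = transpose A - transpose B" for A B :: "real^'n^'n"
      by (simp add: transpose_def vec_eq_iff)
    have e2: "L2norm \<Omega> (\<lambda>x. \<sigma> x - transpose (\<tau> x)) = a"
    proof -
      have "L2norm \<Omega> (\<lambda>x. \<sigma> x - transpose (\<tau> x)) = L2norm \<Omega> (\<lambda>x. transpose (\<sigma> x - \<tau> x))"
      proof (rule L2norm_cong_AE)
        show "(\<lambda>x. \<sigma> x - transpose (\<tau> x)) \<in> borel_measurable (lebesgue_on \<Omega>)"
          using sm ttm by measurable
        have "(\<lambda>x. \<sigma> x - \<tau> x) \<in> borel_measurable (lebesgue_on \<Omega>)" using sm tm by measurable
        then show "(\<lambda>x. transpose (\<sigma> x - \<tau> x)) \<in> borel_measurable (lebesgue_on \<Omega>)"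
          by (rule transpose_meas)
        show "AE x in lebesgue_on \<Omega>. \<sigma> x - transpose (\<tau> x) = transpose (\<sigma> x - \<tau> x)"
          using sym by (auto elim!: AE_mp simp: trd)
      qed
      also have "\<dots> = a" unfolding a_def by (rule L2norm_cong_norm) (simp add: norm_transpose_eq)
      finally show ?thesis .
    qed
    have skm: "(\<lambda>x. \<tau> x - transpose (\<tau> x)) \<in> borel_measurable (lebesgue_on \<Omega>)"
      using tm ttm by measurable
    have skew: "L2norm \<Omega> (\<lambda>x. \<tau> x - transpose (\<tau> x)) \<le> 4 * a"
    proof -
      have "L2norm \<Omega> (\<lambda>x. \<tau> x - transpose (\<tau> x)) \<le> 2 * (L2norm \<Omega> (\<lambda>x. \<tau> x - \<sigma> x) + L2norm \<Omega> (\<lambda>x. \<sigma> x - transpose (\<tau> x)))"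
      proof (rule conjunct2[OF L2_bound[OF e1L e2L skm]])
        fix x
        have "\<tau> x - transpose (\<tau> x) = (\<tau> x - \<sigma> x) + (\<sigma> x - transpose (\<tau> x))" by simp
        then show "norm (\<tau> x - transpose (\<tau> x)) \<le> norm (\<tau> x - \<sigma> x) + norm (\<sigma> x - transpose (\<tau> x))"
          by (metis norm_triangle_ineq)
      qed
      then show ?thesis using e1 e2 by simp
    qed
    have dV: "has_weak_div \<Omega> (\<lambda>x. \<tau> x - \<rho> x) (\<lambda>x. 0) \<and>
        L2norm \<Omega> (\<lambda>x. \<tau> x - \<rho> x) \<le> Cs * L2norm \<Omega> (\<lambda>x. \<tau> x - transpose (\<tau> x))"
      using Cs hH tV by (simp add: \<rho>_def)
    have dL: "L2 \<Omega> (\<lambda>x. \<tau> x - \<rho> x)" using dV by (simp add: has_weak_div_def)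
    have sk0: "0 \<le> L2norm \<Omega> (\<lambda>x. \<tau> x - transpose (\<tau> x))"
      unfolding L2norm_def by (auto intro: integral_nonneg_AE)
    have d: "L2norm \<Omega> (\<lambda>x. \<tau> x - \<rho> x) \<le> \<bar>Cs\<bar> * (4 * a)"
    proof -
      have "Cs * L2norm \<Omega> (\<lambda>x. \<tau> x - transpose (\<tau> x)) \<le> \<bar>Cs\<bar> * L2norm \<Omega> (\<lambda>x. \<tau> x - transpose (\<tau> x))"
        using sk0 by (intro mult_right_mono) auto
      also have "\<dots> \<le> \<bar>Cs\<bar> * (4 * a)" using skew by (intro mult_left_mono) auto
      finally show ?thesis using dV by linarith
    qed
    have fm2: "(\<lambda>x. \<sigma> x - \<rho> x) \<in> borel_measurable (lebesgue_on \<Omega>)" using sm rm by measurable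
    have main: "L2norm \<Omega> (\<lambda>x. \<sigma> x - \<rho> x) \<le> 2 * (a + L2norm \<Omega> (\<lambda>x. \<tau> x - \<rho> x))"
      unfolding a_def
    proof (rule conjunct2[OF L2_bound[OF eL dL fm2]])
      fix x
      have "\<sigma> x - \<rho> x = (\<sigma> x - \<tau> x) + (\<tau> x - \<rho> x)" by simp
      then show "norm (\<sigma> x - \<rho> x) \<le> norm (\<sigma> x - \<tau> x) + norm (\<tau> x - \<rho> x)"
        by (metis norm_triangle_ineq)
    qed
    have "L2norm \<Omega> (\<lambda>x. \<sigma> x - \<rho> x) \<le> 2 * (1 + 4 * \<bar>Cs\<bar>) * a"
      using main d by (simp add: algebra_simps)
    also have "\<dots> \<le> 2 * (1 + 4 * \<bar>Cs\<bar>) * (Ca * (INF \<tau>\<in>{\<tau>. Vh \<Omega> \<Gamma>D (T h) k \<tau>}. L2norm \<Omega> (\<lambda>x. \<sigma> x - \<tau> x)))"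
      using aI by (intro mult_left_mono) auto
    finally show "L2norm \<Omega> (\<lambda>x. \<sigma> x - S h (J h \<sigma>) x)
          \<le> ?C * (INF \<tau>\<in>{\<tau>. Vh \<Omega> \<Gamma>D (T h) k \<tau>}. L2norm \<Omega> (\<lambda>x. \<sigma> x - \<tau> x))"
      by (simp add: \<rho>_def \<tau>_def mult.assoc)
  next
    fix h assume hH: "h \<in> H"
    fix \<sigma> g q assume a: "Xsp \<Omega> \<Gamma>D \<sigma> \<and> has_weak_div \<Omega> \<sigma> g \<and> L2proj \<Omega> (Pk \<Omega> (T h) (k - 1)) g q"
    define \<tau> where "\<tau> = J h \<sigma>"
    define \<rho> where "\<rho> = S h \<tau>"
    have sL: "L2 \<Omega> \<sigma>" using a by (simp add: has_weak_div_def)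
    have tq: "has_weak_div \<Omega> \<tau> q" using J_b hH a unfolding \<tau>_def Xsp_def by blast
    have tV: "Vh \<Omega> \<Gamma>D (T h) k \<tau>" using J_op hH sL by (simp add: \<tau>_def)
    have tL: "L2 \<Omega> \<tau>" using tV by (simp add: Vh_def Pk_def)
    have rX: "Xhc \<Omega> \<Gamma>D (T h) k \<rho>" using S_op hH tV by (simp add: \<rho>_def)
    have rL: "L2 \<Omega> \<rho>" using rX by (simp add: Xhc_def Pk_def)
    have dw: "has_weak_div \<Omega> (\<lambda>x. \<tau> x - \<rho> x) (\<lambda>x. 0)" using Cs hH tV by (simp add: \<rho>_def)
    have dL: "L2 \<Omega> (\<lambda>x. \<tau> x - \<rho> x)" using dw by (simp add: has_weak_div_def)
    have qL: "L2 \<Omega> q" using tq by (simp add: has_weak_div_def)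
    have "has_weak_div \<Omega> \<rho> q"
      unfolding has_weak_div_def
    proof (intro conjI rL qL allI impI)
      fix \<phi> :: "real^'n \<Rightarrow> real^'n" assume t: "test_fun \<Omega> \<phi>"
      have i1: "integrable (lebesgue_on \<Omega>) (\<lambda>x. \<Sum>i\<in>UNIV. \<Sum>j\<in>UNIV. \<tau> x $ i $ j * pd \<phi> j x $ i)"
        by (rule integrable_test[OF fm Osets tL t])
      have i2: "integrable (lebesgue_on \<Omega>) (\<lambda>x. \<Sum>i\<in>UNIV. \<Sum>j\<in>UNIV. (\<tau> x - \<rho> x) $ i $ j * pd \<phi> j x $ i)"
        by (rule integrable_test[OF fm Osets dL t])
      have pw: "(\<Sum>i\<in>UNIV. \<Sum>j\<in>UNIV. \<rho> x $ i $ j * pd \<phi> j x $ i) =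
         (\<Sum>i\<in>UNIV. \<Sum>j\<in>UNIV. \<tau> x $ i $ j * pd \<phi> j x $ i) - (\<Sum>i\<in>UNIV. \<Sum>j\<in>UNIV. (\<tau> x - \<rho> x) $ i $ j * pd \<phi> j x $ i)" for x
        by (simp add: sum_subtractf[symmetric] left_diff_distrib)
      have "(\<integral>x. (\<Sum>i\<in>UNIV. \<Sum>j\<in>UNIV. \<rho> x $ i $ j * pd \<phi> j x $ i) \<partial>lebesgue_on \<Omega>)
          = (\<integral>x. (\<Sum>i\<in>UNIV. \<Sum>j\<in>UNIV. \<tau> x $ i $ j * pd \<phi> j x $ i) \<partial>lebesgue_on \<Omega>)
            - (\<integral>x. (\<Sum>i\<in>UNIV. \<Sum>j\<in>UNIV. (\<tau> x - \<rho> x) $ i $ j * pd \<phi> j x $ i) \<partial>lebesgue_on \<Omega>)"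
        unfolding pw by (rule Bochner_Integration.integral_diff[OF i1 i2])
      also have "\<dots> = - (\<integral>x. q x \<bullet> \<phi> x \<partial>lebesgue_on \<Omega>) - (- (\<integral>x. (\<lambda>x. 0) x \<bullet> \<phi> x \<partial>lebesgue_on \<Omega>))"
      proof -
        have A: "(\<integral>x. (\<Sum>i\<in>UNIV. \<Sum>j\<in>UNIV. \<tau> x $ i $ j * pd \<phi> j x $ i) \<partial>lebesgue_on \<Omega>) = - (\<integral>x. q x \<bullet> \<phi> x \<partial>lebesgue_on \<Omega>)"
          using tq t unfolding has_weak_div_def by blast
        have B: "(\<integral>x. (\<Sum>i\<in>UNIV. \<Sum>j\<in>UNIV. (\<tau> x - \<rho> x) $ i $ j * pd \<phi> j x $ i) \<partial>lebesgue_on \<Omega>) = - (\<integral>x. (\<lambda>x. 0) x \<bullet> \<phi> x \<partial>lebesgue_on \<Omega>)"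
          using dw t unfolding has_weak_div_def by blast
        show ?thesis by (simp only: A B)
      qed
      also have "\<dots> = - (\<integral>x. q x \<bullet> \<phi> x \<partial>lebesgue_on \<Omega>)" by simp
      finally show "(\<integral>x. (\<Sum>i\<in>UNIV. \<Sum>j\<in>UNIV. \<rho> x $ i $ j * pd \<phi> j x $ i) \<partial>lebesgue_on \<Omega>)
          = - (\<integral>x. q x \<bullet> \<phi> x \<partial>lebesgue_on \<Omega>)" .
    qed
    then show "has_weak_div \<Omega> (S h (J h \<sigma>)) q" by (simp add: \<rho>_def \<tau>_def)
  qed
qed

end
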